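(* Let $N$ be a nonnegative integer and $m\in\{0,1,\dots,N\}$. Then for all $x\in\mathbb{C}$: $$K_{2m}(x+N+1;\tfrac12,2N+1)=\frac{(\frac12)_m}{(-N-\frac12)_m}\,R_m(x(x+1);-\tfrac12,\tfrac12,N),$$ $$K_{2m+1}(x+N+1;\tfrac12,2N+1)=\frac{(\frac32)_m}{(-N-\frac12)_{m+1}}\,(x+\tfrac12)\,R_m(x(x+1);\tfrac12,-\tfrac12,N).$$
   Context: $(c)_k=c(c+1)\cdots(c+k-1)$. Krawtchouk polynomials: $K_n(x;p,N)={}_2F_1(-n,-x;-N;p^{-1})=\sum_{k=0}^n\frac{(-n)_k(-x)_k}{(-N)_k\,k!}p^{-k}$. Dual Hahn polynomials: $R_n(y(y+\gamma+\delta+1);\gamma,\delta,N)={}_3F_2(-n,-y,y+\gamma+\delta+1;\gamma+1,-N;1)$, regarded as a polynomial in $\lambda=y(y+\gamma+\delta+1)$; here $\gamma+\delta+1=1$, so $R_m(x(x+1);\gamma,\delta,N)={}_3F_2(-m,-x,x+1;\gamma+1,-N;1)$. *)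

theory Defs
  imports "HOL-Analysis.Analysis"
begin

definition krawtchouk :: "nat \<Rightarrow> complex \<Rightarrow> complex \<Rightarrow> nat \<Rightarrow> complex" where
  "krawtchouk n x p NN = (\<Sum>k\<le>n. pochhammer (- of_nat n) k * pochhammer (- x) k /
      (pochhammer (- of_nat NN) k * of_nat (fact k)) * (inverse p) ^ k)"

text \<open>Dual Hahn polynomial R_n(lambda(y); gamma, delta, N) = 3F2(-n,-y,y+gamma+delta+1; gamma+1,-N; 1),
  where lambda(y) = y(y+gamma+delta+1). It depends on y only through lambda(y);
  we parametrize it by y.\<close>
definition dual_hahn :: "nat \<Rightarrow> complex \<Rightarrow> complex \<Rightarrow> complex \<Rightarrow> nat \<Rightarrow> complex" where
  "dual_hahn n y \<gamma> \<delta> NN = (\<Sum>k\<le>n. pochhammer (- of_nat n) k * pochhammer (- y) k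
      * pochhammer (y + \<gamma> + \<delta> + 1) k /
      (pochhammer (\<gamma> + 1) k * pochhammer (- of_nat NN) k * of_nat (fact k)))"

end

theory Submission
  imports Defs
begin


definition KA :: "nat \<Rightarrow> nat \<Rightarrow> nat \<Rightarrow> complex" where
  "KA M n k = pochhammer (- of_nat n) k / (pochhammer (- of_nat M) k * of_nat (fact k)) * 2^k"

lemma kraw_eq: "krawtchouk n X (1/2) M = (\<Sum>k\<le>n. KA M n k * pochhammer (-X) k)"
  unfolding krawtchouk_def KA_def
proof (rule sum.cong)
  fix k assume "k \<in> {..n}"
  have g: "\<And>a b d e. a * b / d * e = a / d * e * (b::complex)" by simp
  show "pochhammer (- of_nat n) k * pochhammer (- X) k / (pochhammer (- of_nat M) k * of_nat (fact k)) * inverse (1 / 2) ^ k =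
         pochhammer (- of_nat n) k / (pochhammer (- of_nat M) k * of_nat (fact k)) * 2 ^ k * pochhammer (- X) k"
    by (subst g) simp
qed simp

lemma KA_zero: "n < k \<Longrightarrow> KA M n k = 0"
  by (simp add: KA_def pochhammer_of_nat_eq_0_iff)

lemma KA_ext: "n \<le> L \<Longrightarrow> (\<Sum>k\<le>n. KA M n k * P k) = (\<Sum>k\<le>L. KA M n k * P k)"
  by (rule sum.mono_neutral_left) (auto simp: KA_zero)

lemma shift_sum: "(\<Sum>k\<le>L. g k * (P (Suc k)::complex)) = (\<Sum>k\<le>Suc L. (if k = 0 then 0 else g (k-1)) * P k)"
  by (subst sum.atMost_Suc_shift) simp

lemma KA_coef:
  assumes "1 \<le> n" "k \<le> M"
  shows "(of_nat M - 2 * of_nat k) * KA M n k + (if k = 0 then 0 else 2 * KA M n (k-1))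
     = (of_nat M - of_nat n) * KA M (n+1) k + of_nat n * KA M (n-1) k"
proof (cases k)
  case 0 then show ?thesis by (simp add: KA_def)
next
  case (Suc j)
  obtain n' where n: "n = Suc n'" using assms by (cases n) auto
  define r where "r = pochhammer (- of_nat n :: complex) j"
  define c where "c = pochhammer (- of_nat M :: complex) j"
  have c0: "c \<noteq> 0" using assms Suc by (simp add: c_def pochhammer_of_nat_eq_0_iff)
  have cM: "- of_nat M + of_nat j \<noteq> (0::complex)"
  proof
    assume "- of_nat M + of_nat j = (0::complex)"
    then have "(of_nat j::complex) = of_nat M" by (simp add: algebra_simps)
    then have "j = M" using of_nat_eq_iff by blast
    then show False using assms Suc by simp
  qed
  have e1: "pochhammer (- of_nat n :: complex) (Suc j) = r * (- of_nat n + of_nat j)"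
    unfolding r_def pochhammer_rec' by (simp only: mult.commute)
  have e2: "pochhammer (- of_nat (n+1) :: complex) (Suc j) = - (of_nat n + 1) * r"
    unfolding r_def pochhammer_rec by simp
  have e3a: "pochhammer (- of_nat n :: complex) (Suc (Suc j)) = - of_nat n * pochhammer (- of_nat (n-1)) (Suc j)"
    unfolding pochhammer_rec[of _ "Suc j"] using n by simp
  have e3b: "pochhammer (- of_nat n :: complex) (Suc (Suc j)) = r * (- of_nat n + of_nat j) * (- of_nat n + of_nat j + 1)"
    unfolding pochhammer_rec'[of _ "Suc j"] e1 by simp
  have e3: "of_nat n * pochhammer (- of_nat (n-1) :: complex) (Suc j)
      = - (r * (- of_nat n + of_nat j) * (- of_nat n + of_nat j + 1))"
    using e3a e3b by simp
  have e4: "pochhammer (- of_nat M :: complex) (Suc j) = c * (- of_nat M + of_nat j)"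
    unfolding c_def pochhammer_rec' by (simp only: mult.commute)
  define a where "a = - of_nat M + (of_nat j :: complex)"
  have a0: "a \<noteq> 0" using cM a_def by simp
  have Ma: "(of_nat M :: complex) = of_nat j - a" unfolding a_def by simp
  define F where "F = (of_nat (fact j) :: complex)"
  have fj: "F \<noteq> 0" unfolding F_def by simp
  have fS: "(of_nat (fact (Suc j)) :: complex) = (of_nat j + 1) * F" unfolding F_def by (simp add: algebra_simps)
  define J where "J = (of_nat j + 1 :: complex)"
  have j1: "J \<noteq> 0" unfolding J_def by (metis of_nat_Suc of_nat_eq_0_iff nat.distinct(1) add.commute)
  define q where "q = 2 ^ j / (c * a * (J * F))"
  have t3: "of_nat n * KA M (n-1) (Suc j) = - (r * (- of_nat n + of_nat j) * (- of_nat n + of_nat j + 1)) * 2 * q"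
    unfolding KA_def e4 e3[symmetric] a_def fS[symmetric] q_def J_def by simp
  have t1: "KA M n (Suc j) = r * (- of_nat n + of_nat j) * 2 * q"
    unfolding KA_def e4 e1 a_def fS[symmetric] q_def J_def by simp
  have t2: "KA M (n+1) (Suc j) = - (of_nat n + 1) * r * 2 * q"
    unfolding KA_def e4 e2 a_def fS[symmetric] q_def J_def by simp
  have t0: "KA M n j = r * a * J * q"
  proof -
    have "KA M n j = r / (c * F) * 2 ^ j"
      unfolding KA_def r_def c_def F_def by simp
    also have "\<dots> = r * a * J * q" unfolding q_def using a0 j1 by (simp add: field_simps)
    finally show ?thesis .
  qed
  have Mj: "(of_nat M :: complex) = of_nat j - a" unfolding a_def by simp
  have jJ: "(of_nat j :: complex) = J - 1" unfolding J_def by simp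
  have "(of_nat M - 2 * of_nat (Suc j)) * KA M n (Suc j) + 2 * KA M n j
     = (of_nat M - of_nat n) * KA M (n+1) (Suc j) + of_nat n * KA M (n-1) (Suc j)"
    unfolding t3 t1 t2 t0 Mj of_nat_Suc J_def
    by (simp add: algebra_simps)
  then show ?thesis unfolding Suc by simp
qed

lemma kraw_rec:
  fixes X :: complex
  assumes "1 \<le> n" "n < M"
  defines "P \<equiv> \<lambda>k. pochhammer (-X) k"
  shows "(of_nat M - 2 * X) * (\<Sum>k\<le>n. KA M n k * P k)
    = (of_nat M - of_nat n) * (\<Sum>k\<le>n+1. KA M (n+1) k * P k) + of_nat n * (\<Sum>k\<le>n-1. KA M (n-1) k * P k)"
proof -
  have PS: "\<And>k. (of_nat M - 2 * X) * P k = (of_nat M - 2 * of_nat k) * P k + 2 * P (Suc k)"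
    unfolding P_def pochhammer_rec' by (simp add: algebra_simps)
  have "(of_nat M - 2 * X) * (\<Sum>k\<le>n. KA M n k * P k)
      = (\<Sum>k\<le>n. (of_nat M - 2 * of_nat k) * KA M n k * P k) + (\<Sum>k\<le>n. (2 * KA M n k) * P (Suc k))"
  proof -
    have "(of_nat M - 2 * X) * (\<Sum>k\<le>n. KA M n k * P k) = (\<Sum>k\<le>n. KA M n k * ((of_nat M - 2 * X) * P k))"
      by (simp add: sum_distrib_left algebra_simps)
    also have "\<dots> = (\<Sum>k\<le>n. (of_nat M - 2 * of_nat k) * KA M n k * P k + (2 * KA M n k) * P (Suc k))"
      unfolding PS by (simp add: algebra_simps)
    finally show ?thesis by (simp add: sum.distrib)
  qed
  also have "(\<Sum>k\<le>n. (of_nat M - 2 * of_nat k) * KA M n k * P k) = (\<Sum>k\<le>Suc n. (of_nat M - 2 * of_nat k) * KA M n k * P k)"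
    by (simp add: KA_zero)
  also have "(\<Sum>k\<le>n. (2 * KA M n k) * P (Suc k)) = (\<Sum>k\<le>Suc n. (if k = 0 then 0 else 2 * KA M n (k-1)) * P k)"
    by (rule shift_sum)
  also have "(\<Sum>k\<le>Suc n. (of_nat M - 2 * of_nat k) * KA M n k * P k) + (\<Sum>k\<le>Suc n. (if k = 0 then 0 else 2 * KA M n (k-1)) * P k)
     = (\<Sum>k\<le>Suc n. ((of_nat M - of_nat n) * KA M (n+1) k + of_nat n * KA M (n-1) k) * P k)"
    unfolding sum.distrib[symmetric]
  proof (rule sum.cong)
    fix k assume "k \<in> {..Suc n}"
    then have "k \<le> M" using assms by auto
    from KA_coef[OF assms(1) this] show "(of_nat M - 2 * of_nat k) * KA M n k * P k + (if k = 0 then 0 else 2 * KA M n (k - 1)) * P k =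
         ((of_nat M - of_nat n) * KA M (n + 1) k + of_nat n * KA M (n - 1) k) * P k"
      by (metis (no_types, lifting) distrib_right)
  qed simp
  also have "\<dots> = (of_nat M - of_nat n) * (\<Sum>k\<le>n+1. KA M (n+1) k * P k) + of_nat n * (\<Sum>k\<le>Suc n. KA M (n-1) k * P k)"
    by (simp only: distrib_right sum.distrib sum_distrib_left mult.assoc Suc_eq_plus1)
  also have "(\<Sum>k\<le>Suc n. KA M (n-1) k * P k) = (\<Sum>k\<le>n-1. KA M (n-1) k * P k)"
    by (rule KA_ext[symmetric]) simp
  finally show ?thesis .
qed


definition DB :: "complex \<Rightarrow> nat \<Rightarrow> nat \<Rightarrow> nat \<Rightarrow> complex" where
  "DB g N m k = pochhammer (- of_nat m) k / (pochhammer g k * pochhammer (- of_nat N) k * of_nat (fact k))"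
definition cc :: "nat \<Rightarrow> nat \<Rightarrow> complex" where
  "cc N m = pochhammer (1/2) m / pochhammer (- of_nat N - 1/2) m"
definition dd :: "nat \<Rightarrow> nat \<Rightarrow> complex" where
  "dd N m = pochhammer (3/2) m / pochhammer (- of_nat N - 1/2) (m+1)"

lemma half_ne: "(of_nat a :: complex) + 1/2 \<noteq> of_nat b"
proof
  assume "(of_nat a :: complex) + 1/2 = of_nat b"
  then have "Re (of_nat a + 1/2) = Re (of_nat b)" by simp
  then have "real a + 1/2 = real b" by simp
  then have "real (2*a+1) = real (2*b)" by simp
  then have "2*a+1 = 2*b" using of_nat_eq_iff by blast
  then show False by presburger
qed

lemma half_ne2: "- (of_nat a :: complex) - 1/2 \<noteq> - of_nat b"
proof
  assume "- (of_nat a :: complex) - 1/2 = - of_nat b"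
  then have "Re (- (of_nat a :: complex) - 1/2) = Re (- of_nat b)" by (rule arg_cong[where f=Re])
  then have "real a + 1/2 = real b" by simp
  then have "real (2*a+1) = real (2*b)" by simp
  then have "2*a+1 = 2*b" using of_nat_eq_iff by blast
  then show False by presburger
qed

lemma half_ne3: "(1/2 :: complex) \<noteq> - of_nat b"
proof
  assume "(1/2 :: complex) = - of_nat b"
  then have "Re (1/2 :: complex) = Re (- of_nat b)" by (rule arg_cong[where f=Re])
  then show False by simp
qed

lemma ph0: "pochhammer (1/2 :: complex) k \<noteq> 0"
  unfolding pochhammer_eq_0_iff using half_ne3 by auto

lemma ph3: "pochhammer (3/2 :: complex) k \<noteq> 0"
proof -
  have "(3/2::complex) \<noteq> - of_nat b" for b
  proof
    assume "(3/2 :: complex) = - of_nat b"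
    then have "Re (3/2 :: complex) = Re (- of_nat b)" by (rule arg_cong[where f=Re])
    then show False by simp
  qed
  then show ?thesis unfolding pochhammer_eq_0_iff by auto
qed

lemma pN0: "pochhammer (- of_nat N - 1/2 :: complex) k \<noteq> 0"
  unfolding pochhammer_eq_0_iff using half_ne2 by auto

lemma pN1: "- of_nat N - 1/2 + of_nat m \<noteq> (0::complex)"
proof
  assume "- of_nat N - 1/2 + of_nat m = (0::complex)"
  then have "Re (- of_nat N - 1/2 + of_nat m :: complex) = 0" by simp
  then have "real m = real N + 1/2" by simp
  then have "real (2*m) = real (2*N+1)" by simp
  then have "2*m = 2*N+1" using of_nat_eq_iff by blast
  then show False by presburger
qed

lemma h32: "pochhammer (3/2 :: complex) k = 2 * pochhammer (1/2) k * (1/2 + of_nat k)"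
proof -
  have "pochhammer (1/2 :: complex) (Suc k) = 1/2 * pochhammer (3/2) k"
    unfolding pochhammer_rec by simp
  moreover have "pochhammer (1/2 :: complex) (Suc k) = pochhammer (1/2) k * (1/2 + of_nat k)"
    unfolding pochhammer_rec' by (simp add: mult.commute)
  ultimately show ?thesis by (simp add: mult_ac)
qed

lemma dh_eq1: "dual_hahn m x (-1/2) (1/2) N = (\<Sum>k\<le>m. DB (1/2) N m k * (pochhammer (-x) k * pochhammer (x+1) k))"
  unfolding dual_hahn_def DB_def
  by (rule sum.cong) (simp_all add: add.commute)

lemma dh_eq2: "dual_hahn m x (1/2) (-1/2) N = (\<Sum>k\<le>m. DB (3/2) N m k * (pochhammer (-x) k * pochhammer (x+1) k))"
  unfolding dual_hahn_def DB_def
  by (rule sum.cong) (simp_all add: add.commute)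

lemma a_ne: "(1/2 + of_nat k :: complex) \<noteq> 0"
proof
  assume "(1/2 + of_nat k :: complex) = 0"
  then have "Re (1/2 + of_nat k :: complex) = Re 0" by (rule arg_cong[where f=Re])
  then show False by simp
qed

lemma gen_alg: "- x * y = (- x + w) * z \<Longrightarrow> x * y = (x - w) * (z::complex)"
  by algebra

lemma pm_rel: "of_nat (Suc m) * pochhammer (- of_nat m :: complex) k
   = (of_nat (Suc m) - of_nat k) * pochhammer (- of_nat (Suc m)) k"
proof -
  have s1: "- of_nat (Suc m) + 1 = (- of_nat m :: complex)" by simp
  have A: "pochhammer (- of_nat (Suc m) :: complex) (Suc k) = - of_nat (Suc m) * pochhammer (- of_nat m) k"
    unfolding pochhammer_rec s1 ..
  have B: "pochhammer (- of_nat (Suc m) :: complex) (Suc k) = (- of_nat (Suc m) + of_nat k) * pochhammer (- of_nat (Suc m)) k"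
    unfolding pochhammer_rec' ..
  have C: "- of_nat (Suc m) * pochhammer (- of_nat m :: complex) k = (- of_nat (Suc m) + of_nat k) * pochhammer (- of_nat (Suc m)) k"
    using A B by metis
  show ?thesis by (rule gen_alg[OF C])
qed

lemma coef1:
  assumes "Suc m \<le> N" "k \<le> Suc m"
  shows "cc N (Suc m) * DB (1/2) N (Suc m) k = -(1/2) * ((2 * of_nat N + 1 - 2 * of_nat (Suc m)) * dd N (Suc m) * DB (3/2) N (Suc m) k
     + 2 * of_nat (Suc m) * dd N m * DB (3/2) N m k)"
proof -
  define t where "t = pochhammer (3/2 :: complex) m"
  define pq where "pq = pochhammer (- of_nat N - 1/2 :: complex) (Suc m)"
  define h where "h = pochhammer (1/2 :: complex) k"
  define r where "r = pochhammer (- of_nat (Suc m) :: complex) k"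
  define n0 where "n0 = pochhammer (- of_nat N :: complex) k"
  define F where "F = (of_nat (fact k) :: complex)"
  define a where "a = (1/2 + of_nat k :: complex)"
  define b where "b = (- of_nat N - 1/2 + of_nat (Suc m) :: complex)"
  have nz: "t \<noteq> 0" "pq \<noteq> 0" "h \<noteq> 0" "n0 \<noteq> 0" "F \<noteq> 0" "a \<noteq> 0"
    unfolding t_def pq_def h_def n0_def F_def a_def
    using ph3 pN0 ph0 a_ne assms by (auto simp: pochhammer_of_nat_eq_0_iff)
  have nzb: "b \<noteq> 0" unfolding b_def by (rule pN1)
  have f1: "pochhammer (1/2 :: complex) (Suc m) = 1/2 * t"
    unfolding pochhammer_rec t_def by simp
  have f2: "pochhammer (3/2 :: complex) (Suc m) = t * (3/2 + of_nat m)"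
    unfolding pochhammer_rec' t_def by (simp add: mult.commute)
  have f3: "pochhammer (- of_nat N - 1/2 :: complex) (Suc m + 1) = pq * b"
    unfolding pq_def b_def using pochhammer_rec'[of "- of_nat N - 1/2 :: complex" "Suc m"]
    by (simp add: mult.commute)
  have f4: "pochhammer (3/2 :: complex) k = 2 * h * a" unfolding h_def a_def by (rule h32)
  have f6: "2 * of_nat N + 1 - 2 * of_nat (Suc m) = -2 * b" unfolding b_def by (simp add: algebra_simps)
  have L: "cc N (Suc m) * DB (1/2) N (Suc m) k = (1/2 * t) / pq * (r / (h * n0 * F))"
    unfolding cc_def DB_def f1 by (simp add: pq_def r_def h_def n0_def F_def)
  have T1: "(2 * of_nat N + 1 - 2 * of_nat (Suc m)) * dd N (Suc m) * DB (3/2) N (Suc m) k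
     = (-2 * b) * (t * (3/2 + of_nat m) / (pq * b)) * (r / (2 * h * a * n0 * F))"
    unfolding f6 dd_def DB_def f2 f3 f4 by (simp add: r_def n0_def F_def)
  define u where "u = (of_nat (Suc m) :: complex)"
  have nzu: "u \<noteq> 0" unfolding u_def by (simp del: of_nat_Suc)
  have pm': "pochhammer (- of_nat m :: complex) k = (u - of_nat k) * r / u"
    using pm_rel[of m k] nzu unfolding u_def r_def by (simp add: field_simps del: of_nat_Suc)
  have T2: "2 * of_nat (Suc m) * dd N m * DB (3/2) N m k
     = 2 * u * (t / pq) * ((u - of_nat k) * r / u / (2 * h * a * n0 * F))"
    unfolding dd_def DB_def f4 Suc_eq_plus1[symmetric] pq_def[symmetric] t_def[symmetric] n0_def[symmetric] F_def[symmetric] u_def[symmetric] pm' ..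
  show ?thesis unfolding L T1 T2 using nz nzb nzu
    by (simp add: field_simps) (simp add: a_def u_def algebra_simps)
qed

lemma poly2:
  fixes q m N j :: complex
  shows "-2*(((1+j)*(1+j+1) + 1/4)*((1/2+m)*(-m+j)*q) - (1/2+m)*(1/2+(1+j))*(-N+j)*(1+j)*q)
   = (2*N-2*m)*((1/2+m)* -(m+1)*(1/2+(1+j))*q) + (2*m+1)*((-N-1/2+m)*(1/2+(1+j))*(-m+j)*q)"
  by (simp add: field_simps)

lemma coef2:
  assumes "Suc m \<le> N" "k \<le> Suc m"
  shows "-2 * dd N m * ((of_nat k * (of_nat k + 1) + 1/4) * DB (3/2) N m k - (if k = 0 then 0 else DB (3/2) N m (k-1)))
     = (2 * of_nat N - 2 * of_nat m) * cc N (m+1) * DB (1/2) N (m+1) k + (2 * of_nat m + 1) * cc N m * DB (1/2) N m k"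
proof -
  define ph where "ph = pochhammer (1/2 :: complex) m"
  define pq where "pq = pochhammer (- of_nat N - 1/2 :: complex) m"
  define bb where "bb = (- of_nat N - 1/2 + of_nat m :: complex)"
  define am where "am = (1/2 + of_nat m :: complex)"
  have nz0: "ph \<noteq> 0" "pq \<noteq> 0" "bb \<noteq> 0" "am \<noteq> 0"
    unfolding ph_def pq_def bb_def am_def using ph0 pN0 pN1 a_ne by auto
  have c1: "cc N (m+1) = ph * am / (pq * bb)"
    unfolding cc_def ph_def pq_def am_def bb_def Suc_eq_plus1[symmetric] pochhammer_rec'
    by (simp add: mult.commute)
  have c0: "cc N m = ph / pq" unfolding cc_def ph_def pq_def ..
  have d0: "dd N m = 2 * ph * am / (pq * bb)"
    unfolding dd_def h32 ph_def pq_def am_def bb_def Suc_eq_plus1[symmetric] pochhammer_rec'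
    by (simp add: mult.commute)
  show ?thesis
  proof (cases k)
    case 0
    show ?thesis unfolding 0 c1 c0 d0 using nz0
      by (simp add: DB_def field_simps) (simp add: am_def bb_def algebra_simps)
  next
    case (Suc j)
    define r where "r = pochhammer (- of_nat m :: complex) j"
    define h where "h = pochhammer (1/2 :: complex) j"
    define n0 where "n0 = pochhammer (- of_nat N :: complex) j"
    define F where "F = (of_nat (fact j) :: complex)"
    define a1 where "a1 = (1/2 + of_nat j :: complex)"
    define a2 where "a2 = (1/2 + of_nat (Suc j) :: complex)"
    define e where "e = (- of_nat N + of_nat j :: complex)"
    define J where "J = (of_nat (Suc j) :: complex)"
    have nz: "h \<noteq> 0" "n0 \<noteq> 0" "F \<noteq> 0" "a1 \<noteq> 0" "a2 \<noteq> 0" "J \<noteq> 0"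
      unfolding h_def n0_def F_def a1_def a2_def J_def
      using ph0 a_ne assms Suc by (auto simp: pochhammer_of_nat_eq_0_iff simp del: of_nat_Suc)
    have nze: "e \<noteq> 0"
    proof
      assume "e = 0"
      then have "(of_nat j :: complex) = of_nat N" unfolding e_def by (simp add: algebra_simps)
      then have "j = N" using of_nat_eq_iff by blast
      then show False using assms Suc by simp
    qed
    have p1: "pochhammer (1/2 :: complex) (Suc j) = h * a1"
      unfolding pochhammer_rec' h_def a1_def by (simp add: mult.commute)
    have p3: "pochhammer (3/2 :: complex) (Suc j) = 2 * (h * a1) * a2"
      unfolding h32 p1 a2_def ..
    have p3j: "pochhammer (3/2 :: complex) j = 2 * h * a1"
      unfolding h32 h_def a1_def ..
    have pn: "pochhammer (- of_nat N :: complex) (Suc j) = n0 * e"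
      unfolding pochhammer_rec' n0_def e_def by (simp add: mult.commute)
    have fS: "(of_nat (fact (Suc j)) :: complex) = J * F"
      unfolding J_def F_def fact_Suc of_nat_mult of_nat_id ..
    have pm: "pochhammer (- of_nat m :: complex) (Suc j) = r * (- of_nat m + of_nat j)"
      unfolding pochhammer_rec' r_def by (simp add: mult.commute)
    have s1: "- of_nat (m+1) + 1 = (- of_nat m :: complex)" by simp
    have pm1: "pochhammer (- of_nat (m+1) :: complex) (Suc j) = - of_nat (m+1) * r"
      unfolding pochhammer_rec s1 r_def ..
    have D1: "DB (3/2) N m (Suc j) = r * (- of_nat m + of_nat j) / (2 * (h * a1) * a2 * (n0 * e) * (J * F))"
      unfolding DB_def p3 pn fS pm ..
    have D2: "DB (3/2) N m j = r / (2 * h * a1 * n0 * F)"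
      unfolding DB_def p3j r_def n0_def F_def ..
    have D3: "DB (1/2) N (m+1) (Suc j) = - of_nat (m+1) * r / (h * a1 * (n0 * e) * (J * F))"
      unfolding DB_def p1 pn fS pm1 ..
    have D4: "DB (1/2) N m (Suc j) = r * (- of_nat m + of_nat j) / (h * a1 * (n0 * e) * (J * F))"
      unfolding DB_def p1 pn fS pm ..
    define q where "q = ph * r / (h * a1 * a2 * n0 * e * J * F * pq * bb)"
    have T1: "dd N m * DB (3/2) N m (Suc j) = am * (- of_nat m + of_nat j) * q"
      unfolding d0 D1 q_def using nz0 nz nze by (simp add: field_simps)
    have T2: "dd N m * DB (3/2) N m j = am * a2 * e * J * q"
      unfolding d0 D2 q_def using nz0 nz nze by (simp add: field_simps)
    have T3: "cc N (m+1) * DB (1/2) N (m+1) (Suc j) = am * (- of_nat (m+1)) * a2 * q"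
      unfolding c1 D3 q_def using nz0 nz nze by (simp add: field_simps)
    have T4: "cc N m * DB (1/2) N m (Suc j) = bb * a2 * (- of_nat m + of_nat j) * q"
      unfolding c0 D4 q_def using nz0 nz nze by (simp add: field_simps)
    have jJ: "(of_nat (Suc j) :: complex) = J" unfolding J_def ..
    have "-2 * dd N m * ((J * (J + 1) + 1/4) * DB (3/2) N m (Suc j) - DB (3/2) N m j)
       = (2 * of_nat N - 2 * of_nat m) * cc N (m+1) * DB (1/2) N (m+1) (Suc j) + (2 * of_nat m + 1) * cc N m * DB (1/2) N m (Suc j)"
    proof -
      have "-2 * dd N m * ((J * (J + 1) + 1/4) * DB (3/2) N m (Suc j) - DB (3/2) N m j)
         = -2 * ((J * (J + 1) + 1/4) * (dd N m * DB (3/2) N m (Suc j)) - dd N m * DB (3/2) N m j)"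
        by (simp add: algebra_simps)
      also have "\<dots> = -2 * ((J * (J + 1) + 1/4) * (am * (- of_nat m + of_nat j) * q) - am * a2 * e * J * q)"
        unfolding T1 T2 ..
      also have "\<dots> = (2 * of_nat N - 2 * of_nat m) * (am * (- of_nat (m+1)) * a2 * q) + (2 * of_nat m + 1) * (bb * a2 * (- of_nat m + of_nat j) * q)"
        unfolding am_def a2_def e_def J_def bb_def of_nat_Suc of_nat_add of_nat_1 by (rule poly2)
      also have "\<dots> = (2 * of_nat N - 2 * of_nat m) * (cc N (m+1) * DB (1/2) N (m+1) (Suc j)) + (2 * of_nat m + 1) * (cc N m * DB (1/2) N m (Suc j))"
        unfolding T3 T4 ..
      finally show ?thesis by (simp only: mult.assoc)
    qed
    then show ?thesis unfolding Suc jJ by simp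
  qed
qed

lemma DB_zero: "m < k \<Longrightarrow> DB g N m k = 0"
  by (simp add: DB_def pochhammer_of_nat_eq_0_iff)

lemma DB_ext: "m \<le> L \<Longrightarrow> (\<Sum>k\<le>m. DB g N m k * P k) = (\<Sum>k\<le>L. DB g N m k * P k)"
  by (rule sum.mono_neutral_left) (auto simp: DB_zero)

lemma scal: "c * (\<Sum>k\<in>A. f k * P k) = (\<Sum>k\<in>A. (c * f k) * (P k :: complex))"
  by (simp add: sum_distrib_left mult.assoc)

lemma lin2: "a * (\<Sum>k\<in>A. f k * P k) + b * (\<Sum>k\<in>A. g k * P k) = (\<Sum>k\<in>A. (a * f k + b * g k) * (P k :: complex))"
  by (simp add: sum_distrib_left sum.distrib algebra_simps)

lemma rec1:
  assumes "Suc m \<le> N"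
  shows "cc N (Suc m) * (\<Sum>k\<le>Suc m. DB (1/2) N (Suc m) k * P k)
    = -(1/2) * ((2 * of_nat N + 1 - 2 * of_nat (Suc m)) * dd N (Suc m) * (\<Sum>k\<le>Suc m. DB (3/2) N (Suc m) k * P k)
       + 2 * of_nat (Suc m) * dd N m * (\<Sum>k\<le>m. DB (3/2) N m k * P k))"
proof -
  have E: "(\<Sum>k\<le>m. DB (3/2) N m k * P k) = (\<Sum>k\<le>Suc m. DB (3/2) N m k * P k)"
    by (rule DB_ext) simp
  have "cc N (Suc m) * (\<Sum>k\<le>Suc m. DB (1/2) N (Suc m) k * P k)
     = (\<Sum>k\<le>Suc m. (cc N (Suc m) * DB (1/2) N (Suc m) k) * P k)" by (rule scal)
  also have "\<dots> = (\<Sum>k\<le>Suc m. (-(1/2) * ((2 * of_nat N + 1 - 2 * of_nat (Suc m)) * dd N (Suc m) * DB (3/2) N (Suc m) k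
     + 2 * of_nat (Suc m) * dd N m * DB (3/2) N m k)) * P k)"
    by (rule sum.cong) (simp_all add: coef1[OF assms])
  also have "\<dots> = -(1/2) * ((2 * of_nat N + 1 - 2 * of_nat (Suc m)) * dd N (Suc m) * (\<Sum>k\<le>Suc m. DB (3/2) N (Suc m) k * P k)
       + 2 * of_nat (Suc m) * dd N m * (\<Sum>k\<le>Suc m. DB (3/2) N m k * P k))"
    by (subst lin2, rule scal[symmetric])
  finally show ?thesis unfolding E .
qed

lemma rec2:
  fixes x :: complex
  assumes "Suc m \<le> N"
  defines "Q \<equiv> \<lambda>k. pochhammer (-x) k * pochhammer (x+1) k"
  shows "-2 * dd N m * ((x * (x+1) + 1/4) * (\<Sum>k\<le>m. DB (3/2) N m k * Q k))
    = (2 * of_nat N - 2 * of_nat m) * cc N (m+1) * (\<Sum>k\<le>m+1. DB (1/2) N (m+1) k * Q k)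
      + (2 * of_nat m + 1) * cc N m * (\<Sum>k\<le>m. DB (1/2) N m k * Q k)"
proof -
  have QS: "\<And>k. (x * (x+1) + 1/4) * Q k = (of_nat k * (of_nat k + 1) + 1/4) * Q k - Q (Suc k)"
    unfolding Q_def pochhammer_rec' by (simp add: algebra_simps)
  have "(x * (x+1) + 1/4) * (\<Sum>k\<le>m. DB (3/2) N m k * Q k)
     = (\<Sum>k\<le>m. (of_nat k * (of_nat k + 1) + 1/4) * DB (3/2) N m k * Q k) - (\<Sum>k\<le>m. DB (3/2) N m k * Q (Suc k))"
  proof -
    have "(x * (x+1) + 1/4) * (\<Sum>k\<le>m. DB (3/2) N m k * Q k) = (\<Sum>k\<le>m. DB (3/2) N m k * ((x * (x+1) + 1/4) * Q k))"
      by (simp add: sum_distrib_left algebra_simps)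
    also have "\<dots> = (\<Sum>k\<le>m. (of_nat k * (of_nat k + 1) + 1/4) * DB (3/2) N m k * Q k - DB (3/2) N m k * Q (Suc k))"
      unfolding QS by (simp add: algebra_simps)
    finally show ?thesis by (simp add: sum_subtractf)
  qed
  also have "(\<Sum>k\<le>m. (of_nat k * (of_nat k + 1) + 1/4) * DB (3/2) N m k * Q k) = (\<Sum>k\<le>Suc m. (of_nat k * (of_nat k + 1) + 1/4) * DB (3/2) N m k * Q k)"
    by (simp add: DB_zero)
  also have "(\<Sum>k\<le>m. DB (3/2) N m k * Q (Suc k)) = (\<Sum>k\<le>Suc m. (if k = 0 then 0 else DB (3/2) N m (k-1)) * Q k)"
    by (rule shift_sum)
  finally have A: "(x * (x+1) + 1/4) * (\<Sum>k\<le>m. DB (3/2) N m k * Q k)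
     = (\<Sum>k\<le>Suc m. ((of_nat k * (of_nat k + 1) + 1/4) * DB (3/2) N m k - (if k = 0 then 0 else DB (3/2) N m (k-1))) * Q k)"
    by (simp add: sum_subtractf left_diff_distrib)
  have B: "(\<Sum>k\<le>m. DB (1/2) N m k * Q k) = (\<Sum>k\<le>Suc m. DB (1/2) N m k * Q k)"
    by (rule DB_ext) simp
  have "-2 * dd N m * ((x * (x+1) + 1/4) * (\<Sum>k\<le>m. DB (3/2) N m k * Q k))
     = (\<Sum>k\<le>Suc m. ((2 * of_nat N - 2 * of_nat m) * cc N (m+1) * DB (1/2) N (m+1) k + (2 * of_nat m + 1) * cc N m * DB (1/2) N m k) * Q k)"
    unfolding A scal[of "-2 * dd N m"]
  proof (rule sum.cong)
    fix k assume "k \<in> {..Suc m}"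
    then have k: "k \<le> Suc m" by simp
    show "-2 * dd N m * ((of_nat k * (of_nat k + 1) + 1/4) * DB (3/2) N m k - (if k = 0 then 0 else DB (3/2) N m (k-1))) * Q k
       = ((2 * of_nat N - 2 * of_nat m) * cc N (m+1) * DB (1/2) N (m+1) k + (2 * of_nat m + 1) * cc N m * DB (1/2) N m k) * Q k"
      by (rule arg_cong[where f="\<lambda>t. t * Q k"], rule coef2[OF assms(1) k])
  qed simp
  also have "\<dots> = (2 * of_nat N - 2 * of_nat m) * cc N (m+1) * (\<Sum>k\<le>Suc m. DB (1/2) N (m+1) k * Q k)
      + (2 * of_nat m + 1) * cc N m * (\<Sum>k\<le>Suc m. DB (1/2) N m k * Q k)"
    by (simp only: lin2)
  also have "\<dots> = (2 * of_nat N - 2 * of_nat m) * cc N (m+1) * (\<Sum>k\<le>m+1. DB (1/2) N (m+1) k * Q k)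
      + (2 * of_nat m + 1) * cc N m * (\<Sum>k\<le>m. DB (1/2) N m k * Q k)"
    unfolding B by simp
  finally show ?thesis .
qed



lemma Fn_rec:
  fixes N :: nat and x :: complex
  defines "Rh \<equiv> \<lambda>m. (\<Sum>k\<le>m. DB (1/2) N m k * (pochhammer (-x) k * pochhammer (x+1) k))"
  defines "R3 \<equiv> \<lambda>m. (\<Sum>k\<le>m. DB (3/2) N m k * (pochhammer (-x) k * pochhammer (x+1) k))"
  defines "Fn \<equiv> \<lambda>n. if even n then cc N (n div 2) * Rh (n div 2) else dd N (n div 2) * (x + 1/2) * R3 (n div 2)"
  assumes "1 \<le> n" "n < 2*N+1"
  shows "(of_nat (2*N+1) - 2 * (x + of_nat N + 1)) * Fn n = (of_nat (2*N+1) - of_nat n) * Fn (n+1) + of_nat n * Fn (n-1)"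
proof (cases "even n")
  case True
  then obtain m where n: "n = 2 * Suc m" using assms(4) by (metis dvd_def Suc_pred gr0I mult_0_right not_one_le_zero)
  have mN: "Suc m \<le> N" using assms n by simp
  have r1: "cc N (Suc m) * Rh (Suc m) = -(1/2) * ((2 * of_nat N + 1 - 2 * of_nat (Suc m)) * dd N (Suc m) * R3 (Suc m)
       + 2 * of_nat (Suc m) * dd N m * R3 m)"
    unfolding Rh_def R3_def by (rule rec1[OF mN])
  have F0: "Fn n = cc N (Suc m) * Rh (Suc m)" unfolding Fn_def n by simp
  have F1: "Fn (n+1) = dd N (Suc m) * (x + 1/2) * R3 (Suc m)" unfolding Fn_def n by simp
  have F2: "Fn (n-1) = dd N m * (x + 1/2) * R3 m"
  proof -
    have "n - 1 = 2 * m + 1" using n by simp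
    then show ?thesis unfolding Fn_def by simp
  qed
  show ?thesis unfolding F0 F1 F2 r1 unfolding n by (simp add: field_simps; simp add: algebra_simps)
next
  case False
  then obtain m where n: "n = 2 * m + 1" using oddE by blast
  have mN: "Suc m \<le> N" using assms n by simp
  have r2: "-2 * dd N m * ((x * (x+1) + 1/4) * R3 m)
    = (2 * of_nat N - 2 * of_nat m) * cc N (m+1) * Rh (m+1) + (2 * of_nat m + 1) * cc N m * Rh m"
    unfolding Rh_def R3_def by (rule rec2[OF mN])
  have F0: "Fn n = dd N m * (x + 1/2) * R3 m" unfolding Fn_def n by simp
  have F1: "Fn (n+1) = cc N (m+1) * Rh (m+1)"
  proof -
    have "n + 1 = 2 * (m+1)" using n by simp
    then show ?thesis unfolding Fn_def by simp
  qed
  have F2: "Fn (n-1) = cc N m * Rh m" unfolding Fn_def n by simp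
  have "(of_nat (2*N+1) - 2 * (x + of_nat N + 1)) * Fn n = -2 * dd N m * ((x * (x+1) + 1/4) * R3 m)"
    unfolding F0 by (simp add: field_simps; simp add: algebra_simps)
  also have "\<dots> = (of_nat (2*N+1) - of_nat n) * Fn (n+1) + of_nat n * Fn (n-1)"
    unfolding r2 F1 F2 unfolding n by (simp add: algebra_simps)
  finally show ?thesis .
qed

lemma base0:
  fixes c x :: complex
  assumes "c \<noteq> 0"
  shows "1 - 2 * (x + (- c - 1/2) + 1) / (-2 * c) = (x + 1/2) / c"
  using assms by (simp add: field_simps)

lemma base1:
  fixes n x :: complex
  assumes ne: "- n - 1/2 \<noteq> 0"
  shows "1 - 2 * (x + n + 1) / (2 * n + 1) = (x + 1/2) / (- n - 1/2)"
proof -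
  have e: "n = - (- n - 1/2) - 1/2" "2 * n + 1 = -2 * (- n - 1/2)" by (simp_all add: algebra_simps)
  show ?thesis using base0[OF ne, of x] e by metis
qed

theorem mainTheorem17:
  fixes N m :: nat and x :: complex
  assumes "m \<le> N"
  shows "(krawtchouk (2*m) (x + of_nat N + 1) (1/2) (2*N+1)
           = pochhammer (1/2) m / pochhammer (- of_nat N - 1/2) m
             * dual_hahn m x (-1/2) (1/2) N)
    \<and> (krawtchouk (2*m+1) (x + of_nat N + 1) (1/2) (2*N+1)
           = pochhammer (3/2) m / pochhammer (- of_nat N - 1/2) (m+1)
             * (x + 1/2) * dual_hahn m x (1/2) (-1/2) N)"
proof -
  define X where "X = x + of_nat N + 1"
  define M where "M = 2*N+1"
  define K where "K = (\<lambda>n. \<Sum>k\<le>n. KA M n k * pochhammer (-X) k)"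
  define Rh where "Rh = (\<lambda>m. (\<Sum>k\<le>m. DB (1/2) N m k * (pochhammer (-x) k * pochhammer (x+1) k)))"
  define R3 where "R3 = (\<lambda>m. (\<Sum>k\<le>m. DB (3/2) N m k * (pochhammer (-x) k * pochhammer (x+1) k)))"
  define Fn where "Fn = (\<lambda>n. if even n then cc N (n div 2) * Rh (n div 2) else dd N (n div 2) * (x + 1/2) * R3 (n div 2))"
  have KR: "(of_nat M - 2 * X) * K n = (of_nat M - of_nat n) * K (n+1) + of_nat n * K (n-1)"
    if "1 \<le> n" "n < M" for n
    unfolding K_def using kraw_rec[OF that] by simp
  have FR: "(of_nat M - 2 * X) * Fn n = (of_nat M - of_nat n) * Fn (n+1) + of_nat n * Fn (n-1)"
    if "1 \<le> n" "n < M" for n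
    using Fn_rec[of n N x] that unfolding Fn_def Rh_def R3_def M_def X_def by simp
  have main: "n \<le> M \<Longrightarrow> K n = Fn n" for n
  proof (induction n rule: less_induct)
    case (less n)
    show ?case
    proof (cases n)
      case 0
      then show ?thesis unfolding K_def Fn_def Rh_def cc_def by (simp add: KA_def DB_def)
    next
      case (Suc n1)
      show ?thesis
      proof (cases n1)
        case 0
        have M0: "(of_nat M :: complex) = 2 * of_nat N + 1" unfolding M_def by simp
        have h: "(2 * of_nat N + 1 :: complex) \<noteq> 0"
          by (metis of_nat_Suc of_nat_eq_0_iff nat.distinct(1) of_nat_mult of_nat_numeral add.commute Suc_eq_plus1)
        have h2: "(- of_nat N - 1/2 :: complex) \<noteq> 0" using pN1[of N 0] by simp
        have "K 1 = 1 - 2 * X / of_nat M" unfolding K_def by (simp add: KA_def)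
        moreover have "Fn 1 = (x + 1/2) / (- of_nat N - 1/2)" unfolding Fn_def R3_def dd_def by (simp add: DB_def)
        moreover have "1 - 2 * X / of_nat M = (x + 1/2) / (- of_nat N - 1/2)"
          unfolding M0 X_def by (rule base1[OF h2])
        ultimately show ?thesis unfolding Suc 0 by simp
      next
        case (Suc j)
        have n: "n = Suc (Suc j)" using Suc \<open>n = Suc n1\<close> by simp
        have "K (Suc j) = Fn (Suc j)" "K j = Fn j" using less n by auto
        moreover have "(of_nat M - 2 * X) * K (Suc j) = (of_nat M - of_nat (Suc j)) * K (Suc (Suc j)) + of_nat (Suc j) * K j"
          using KR[of "Suc j"] less.prems n by simp
        moreover have "(of_nat M - 2 * X) * Fn (Suc j) = (of_nat M - of_nat (Suc j)) * Fn (Suc (Suc j)) + of_nat (Suc j) * Fn j"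
          using FR[of "Suc j"] less.prems n by simp
        moreover have "(of_nat M - of_nat (Suc j) :: complex) \<noteq> 0"
        proof
          assume "(of_nat M - of_nat (Suc j) :: complex) = 0"
          then have "(of_nat M :: complex) = of_nat (Suc j)" by simp
          then have "M = Suc j" using of_nat_eq_iff by blast
          then show False using less.prems n by simp
        qed
        ultimately have "(of_nat M - of_nat (Suc j)) * K (Suc (Suc j)) = (of_nat M - of_nat (Suc j)) * Fn (Suc (Suc j))"
          by (metis add_right_cancel)
        with \<open>(of_nat M - of_nat (Suc j) :: complex) \<noteq> 0\<close> show ?thesis unfolding n by simp
      qed
    qed
  qed
  have e1: "K (2*m) = Fn (2*m)" using main assms unfolding M_def by simp
  have e2: "K (2*m+1) = Fn (2*m+1)" using main assms unfolding M_def by simp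
  have k1: "krawtchouk (2*m) (x + of_nat N + 1) (1/2) (2*N+1) = K (2*m)"
    unfolding K_def X_def M_def kraw_eq ..
  have k2: "krawtchouk (2*m+1) (x + of_nat N + 1) (1/2) (2*N+1) = K (2*m+1)"
    unfolding K_def X_def M_def kraw_eq ..
  have f1: "Fn (2*m) = pochhammer (1/2) m / pochhammer (- of_nat N - 1/2) m * dual_hahn m x (-1/2) (1/2) N"
    unfolding Fn_def dh_eq1 Rh_def cc_def by simp
  have f2: "Fn (2*m+1) = pochhammer (3/2) m / pochhammer (- of_nat N - 1/2) (m+1) * (x + 1/2) * dual_hahn m x (1/2) (-1/2) N"
    unfolding Fn_def dh_eq2 R3_def dd_def by simp
  show ?thesis using k1 k2 e1 e2 f1 f2 by simp
qed

end
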